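(* Let $n\geq 2$ and let $\mathcal{G}=(\mathcal{V},\mathcal{E})$ be a directed graph on $\mathcal{V}=\{1,\ldots,n\}$ in which every node has at least one outgoing edge, with hyperlink matrix $A$, let $m\in(0,1)$, let $x^*$ be the PageRank vector, and let $Q=(1-m)A$. Let $\mathcal{V}_1,\ldots,\mathcal{V}_N$ ($1\leq N\leq n$) be a partition of $\mathcal{V}$ into nonempty groups of consecutive indices, $\mathcal{V}_1=\{1,\ldots,l_1\}$, $\mathcal{V}_2=\{l_1+1,\ldots,l_1+l_2\}$, $\ldots$, $\mathcal{V}_N=\{n-l_N+1,\ldots,n\}$, and partition $Q$ into blocks $\check{Q}_{hg}\in\mathbb{R}^{l_h\times l_g}$ ($h,g=1,\ldots,N$) accordingly; likewise write the state vectors as $x(k)=(\check{x}_1(k)^T,\ldots,\check{x}_N(k)^T)^T$ and $z(k)=(\check{z}_1(k)^T,\ldots,\check{z}_N(k)^T)^T$ with $\check{x}_h(k),\check{z}_h(k)\in\mathbb{R}^{l_h}$. Let $\{\psi(k)\}_{k\geq 0}$ be a sequence in $\{1,\ldots,N\}$ in which every group index appears infinitely many times. Consider the algorithm with $\check{x}_h(0)=\check{z}_h(0)=\frac{m}{n}\mathbf{1}_{l_h}$ for all $h$, and for $k\geq 0$ and each $h$, $$\check{x}_h(k+1)=\check{x}_h(k)+\check{Q}_{h\psi(k)}\big(I-\check{Q}_{\psi(k)\psi(k)}\big)^{-1}\check{z}_{\psi(k)}(k),$$ $$\check{z}_h(k+1)=\begin{cases}0&\text{if } h=\psi(k),\\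 \check{z}_h(k)+\check{Q}_{h\psi(k)}\big(I-\check{Q}_{\psi(k)\psi(k)}\big)^{-1}\check{z}_{\psi(k)}(k)&\text{otherwise.}\end{cases}$$ Then $x(k)\to x^*$ as $k\to\infty$. If, in addition, there is $T>0$ such that every group index appears among $\psi(k),\ldots,\psi(k+T-1)$ for every $k\geq 0$, then the convergence is exponential, i.e., there exist $C>0$ and $\rho\in(0,1)$ with $\|x(k)-x^*\|\leq C\rho^k$ for all $k\geq 0$.
   Context: Write $(i,j)\in\mathcal{E}$ if page $i$ has a link to page $j$. $\mathcal{L}_j^{\text{out}}=\{i:(j,i)\in\mathcal{E}\}$ and $n_j=|\mathcal{L}_j^{\text{out}}|\geq 1$. The hyperlink matrix $A=(a_{ij})$ is defined by $a_{ij}=1/n_j$ if $i\in\mathcal{L}_j^{\text{out}}$ and $a_{ij}=0$ otherwise (column stochastic). The PageRank vector $x^*$ satisfies $x^*=(1-m)Ax^*+\frac{m}{n}\mathbf{1}_n$ and $\mathbf{1}_n^Tx^*=1$. Each diagonal block $\check{Q}_{hh}$ is a nonnegative principal submatrix of the Schur stable matrix $Q$, so $I-\check{Q}_{hh}$ is invertible. (Pages are assumed indexed so that groups are consecutive blocks.) *)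

theory Defs
  imports "Jordan_Normal_Form.Gauss_Jordan_Elimination"
begin

text \<open>Pages are indexed 0,...,n-1; a graph is a set of pairs E, (i,j) in E meaning page i links to page j.\<close>

definition out_links :: "(nat \<times> nat) set \<Rightarrow> nat \<Rightarrow> nat set" where
  "out_links E j = {i. (j, i) \<in> E}"

definition hyperlink_mat :: "nat \<Rightarrow> (nat \<times> nat) set \<Rightarrow> real mat" where
  "hyperlink_mat n E = mat n n (\<lambda>(i, j).
     if i \<in> out_links E j then 1 / real (card (out_links E j)) else 0)"

definition is_pagerank :: "nat \<Rightarrow> (nat \<times> nat) set \<Rightarrow> real \<Rightarrow> real vec \<Rightarrow> bool" where
  "is_pagerank n E m x \<longleftrightarrow> x \<in> carrier_vec n \<and>
     x = (1 - m) \<cdot>\<^sub>m hyperlink_mat n E *\<^sub>v x + vec n (\<lambda>_. m / real n) \<and>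
     (\<Sum>i<n. x $ i) = 1"

text \<open>Groups are indexed 0,...,N-1; group h consists of the l h consecutive indices
  starting at offset off l h.\<close>

definition off :: "(nat \<Rightarrow> nat) \<Rightarrow> nat \<Rightarrow> nat" where
  "off l h = (\<Sum>g<h. l g)"

definition grp :: "(nat \<Rightarrow> nat) \<Rightarrow> nat \<Rightarrow> nat" where
  "grp l i = (LEAST h. i < off l (Suc h))"

definition blk :: "(nat \<Rightarrow> nat) \<Rightarrow> real mat \<Rightarrow> nat \<Rightarrow> nat \<Rightarrow> real mat" where
  "blk l Q h g = mat (l h) (l g) (\<lambda>(i, j). Q $$ (off l h + i, off l g + j))"

definition incr :: "(nat \<Rightarrow> nat) \<Rightarrow> real mat \<Rightarrow> nat \<Rightarrow> nat \<Rightarrow> real vec \<Rightarrow> real vec" where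
  "incr l Q h p zp = blk l Q h p *\<^sub>v
     (the (mat_inverse (1\<^sub>m (l p) - blk l Q p p)) *\<^sub>v zp)"

fun alg :: "nat \<Rightarrow> real \<Rightarrow> (nat \<Rightarrow> nat) \<Rightarrow> real mat \<Rightarrow> (nat \<Rightarrow> nat) \<Rightarrow> nat
            \<Rightarrow> (nat \<Rightarrow> real vec) \<times> (nat \<Rightarrow> real vec)" where
  "alg n m l Q \<psi> 0 = ((\<lambda>h. vec (l h) (\<lambda>_. m / real n)), (\<lambda>h. vec (l h) (\<lambda>_. m / real n)))"
| "alg n m l Q \<psi> (Suc k) =
     (let (X, Z) = alg n m l Q \<psi> k; p = \<psi> k in
      ((\<lambda>h. X h + incr l Q h p (Z p)),
       (\<lambda>h. if h = p then 0\<^sub>v (l h) else Z h + incr l Q h p (Z p))))"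

definition stack :: "nat \<Rightarrow> (nat \<Rightarrow> nat) \<Rightarrow> (nat \<Rightarrow> real vec) \<Rightarrow> real vec" where
  "stack n l X = vec n (\<lambda>i. X (grp l i) $ (i - off l (grp l i)))"

definition vnorm :: "nat \<Rightarrow> real vec \<Rightarrow> real" where
  "vnorm n v = sqrt (\<Sum>i<n. (v $ i)\<^sup>2)"

end

theory Submission
  imports Defs "Jordan_Normal_Form.Determinant"
begin


lemma nonneg_fix:
  fixes B :: "nat \<Rightarrow> nat \<Rightarrow> real" and u v :: "nat \<Rightarrow> real"
  assumes Bnn: "\<And>i j. i < d \<Longrightarrow> j < d \<Longrightarrow> B i j \<ge> 0"
    and cs: "\<And>j. j < d \<Longrightarrow> (\<Sum>i<d. B i j) \<le> c" and c1: "c < 1"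
    and vnn: "\<And>i. i < d \<Longrightarrow> v i \<ge> 0"
    and eq: "\<And>i. i < d \<Longrightarrow> u i = v i + (\<Sum>j<d. B i j * u j)"
  shows "\<And>i. i < d \<Longrightarrow> u i \<ge> 0"
proof -
  define a where "a i = max 0 (- u i)" for i
  have a0: "a i \<ge> 0" for i unfolding a_def by simp
  have ai: "a i \<le> (\<Sum>j<d. B i j * a j)" if i: "i < d" for i
  proof -
    have "- u i \<le> (\<Sum>j<d. B i j * (- u j))"
      using eq[OF i] vnn[OF i] by (simp add: sum_negf)
    also have "\<dots> \<le> (\<Sum>j<d. B i j * a j)"
      by (rule sum_mono, rule mult_left_mono) (auto simp: a_def Bnn i)
    finally have 1: "- u i \<le> (\<Sum>j<d. B i j * a j)" .
    have "0 \<le> (\<Sum>j<d. B i j * a j)" by (intro sum_nonneg) (simp add: Bnn i a0)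
    with 1 show ?thesis by (simp add: a_def)
  qed
  have "(\<Sum>i<d. a i) \<le> (\<Sum>i<d. \<Sum>j<d. B i j * a j)" by (rule sum_mono) (simp add: ai)
  also have "\<dots> = (\<Sum>j<d. (\<Sum>i<d. B i j) * a j)"
    by (subst sum.swap) (simp add: sum_distrib_right)
  also have "\<dots> \<le> (\<Sum>j<d. c * a j)"
    by (rule sum_mono) (simp add: cs a0 mult_right_mono)
  finally have "(\<Sum>i<d. a i) \<le> c * (\<Sum>i<d. a i)" by (simp add: sum_distrib_left)
  moreover have "(\<Sum>i<d. a i) \<ge> 0" by (simp add: sum_nonneg a0)
  ultimately have s0: "(\<Sum>i<d. a i) = 0"
    using c1 by (smt (verit) mult_le_cancel_right1)
  fix i assume "i < d"
  then have "a i = 0" using s0 a0 by (simp add: sum_nonneg_eq_0_iff)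
  then show "u i \<ge> 0" by (simp add: a_def)
qed

lemma part2_aux:
  fixes s :: "nat \<Rightarrow> real" and y :: "nat \<Rightarrow> nat \<Rightarrow> real" and m :: real and T n :: nat
  assumes m0: "0 < m" and m1: "m < 1" and T: "T > 0"
    and window: "\<And>K. s (K + T) \<le> (1 - m) * s K"
    and smono: "\<And>K t. s (K + t) \<le> s K" and s0: "s 0 = m"
    and ysum: "\<And>k. m * (\<Sum>i<n. y k i) = (1 - m) * s k"
    and ynn: "\<And>k i. i < n \<Longrightarrow> y k i \<ge> 0"
  shows "\<exists>\<rho>. 0 < \<rho> \<and> \<rho> < 1 \<and> (\<forall>k. sqrt (\<Sum>i<n. (y k i)\<^sup>2) \<le> \<rho> ^ k)"
proof -
  have sT: "s (j * T) \<le> (1 - m) ^ j * m" for j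
  proof (induction j)
    case 0 then show ?case using s0 by simp
  next
    case (Suc j)
    have "s (Suc j * T) = s (j * T + T)" by (simp add: add.commute)
    also have "\<dots> \<le> (1 - m) * s (j * T)"
      by (rule window)
    also have "\<dots> \<le> (1 - m) * ((1 - m) ^ j * m)" using Suc m1 by (simp add: mult_left_mono)
    finally show ?case by simp
  qed
  define \<rho> where "\<rho> = root T (1 - m)"
  have rho0: "0 < \<rho>" unfolding \<rho>_def using T m1 by (simp add: real_root_gt_zero)
  have rho1: "\<rho> < 1" unfolding \<rho>_def using T m0 by simp
  have rhoT: "\<rho> ^ T = 1 - m" unfolding \<rho>_def using T m1 by simp
  have main: "(\<Sum>i<n. y k i) \<le> \<rho> ^ k" for k
  proof -
    have kk: "k div T * T + (k - k div T * T) = k" using div_mult_mod_eq[of k T] by linarith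
    have "s k \<le> s (k div T * T)" using smono[of "k div T * T" "k - k div T * T"]
      by (simp only: kk)
    also have "\<dots> \<le> (1 - m) ^ (k div T) * m" by (rule sT)
    finally have "(1 - m) * s k \<le> (1 - m) * ((1 - m) ^ (k div T) * m)"
      using m1 by (simp add: mult_left_mono)
    then have "m * (\<Sum>i<n. y k i) \<le> m * (1 - m) ^ Suc (k div T)" using ysum[of k] by (simp add: algebra_simps)
    then have A: "(\<Sum>i<n. y k i) \<le> (1 - m) ^ Suc (k div T)" using m0 by simp
    have "\<rho> ^ T \<le> \<rho> ^ (k mod T)"
      by (rule power_decreasing) (use rho0 rho1 T in \<open>auto intro: less_imp_le\<close>)
    then have "(1 - m) ^ (k div T) * \<rho> ^ T \<le> (1 - m) ^ (k div T) * \<rho> ^ (k mod T)"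
      by (rule mult_left_mono) (use m1 in simp)
    then have "(1 - m) ^ Suc (k div T) \<le> (1 - m) ^ (k div T) * \<rho> ^ (k mod T)"
      using rhoT by (simp only: power_Suc2)
    also have "\<dots> = \<rho> ^ k"
    proof -
      have e: "T * (k div T) + k mod T = k" by simp
      have "\<rho> ^ k = (\<rho> ^ T) ^ (k div T) * \<rho> ^ (k mod T)"
        by (metis e power_add power_mult)
      then show ?thesis using rhoT by simp
    qed
    finally show ?thesis using A by linarith
  qed
  have "sqrt (\<Sum>i<n. (y k i)\<^sup>2) \<le> \<rho> ^ k" for k
  proof -
    have sq: "(\<Sum>i<n. (y k i)\<^sup>2) = (\<Sum>i<n. y k i * y k i)"
      by (simp add: power2_eq_square)
    have "(\<Sum>i<n. y k i * y k i) \<le> (\<Sum>i<n. y k i * (\<Sum>i<n. y k i))"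
    proof (rule sum_mono, rule mult_left_mono)
      fix i assume "i \<in> {..<n}"
      then show "y k i \<le> (\<Sum>i<n. y k i)" "0 \<le> y k i"
        using ynn by (auto intro!: member_le_sum[where f = "y k"])
    qed
    also have "\<dots> = (\<Sum>i<n. y k i)\<^sup>2" by (simp add: sum_distrib_right power2_eq_square)
    finally have "sqrt (\<Sum>i<n. (y k i)\<^sup>2) \<le> sqrt ((\<Sum>i<n. y k i)\<^sup>2)"
      using sq real_sqrt_le_mono by presburger
    also have "\<dots> = (\<Sum>i<n. y k i)"
    proof -
      have "0 \<le> (\<Sum>i<n. y k i)" using ynn by (intro sum_nonneg) simp
      then show ?thesis by simp
    qed
    finally show ?thesis using main[of k] by linarith
  qed
  then show ?thesis using rho0 rho1 by blast
qed


lemma abstract_conv: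
  fixes q :: "nat \<Rightarrow> nat \<Rightarrow> real" and x z W :: "nat \<Rightarrow> nat \<Rightarrow> real"
    and g psi :: "nat \<Rightarrow> nat" and xs :: "nat \<Rightarrow> real" and bb m :: real
  assumes m0: "0 < m" and m1: "m < 1"
    and qnn: "\<And>i j. i < n \<Longrightarrow> j < n \<Longrightarrow> q i j \<ge> 0"
    and qcs: "\<And>j. j < n \<Longrightarrow> (\<Sum>i<n. q i j) = 1 - m"
    and psiN: "\<And>k. psi k < N" and gN: "\<And>i. i < n \<Longrightarrow> g i < N"
    and psi_inf: "\<forall>h<N. \<forall>K. \<exists>k\<ge>K. psi k = h"
    and bb: "bb \<ge> 0" "real n * bb = m"
    and x0: "\<And>i. i < n \<Longrightarrow> x 0 i = bb"
    and z0: "\<And>i. i < n \<Longrightarrow> z 0 i = bb"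
    and xs: "\<And>i. i < n \<Longrightarrow> xs i = (\<Sum>j<n. q i j * xs j) + bb"
    and xS: "\<And>k i. i < n \<Longrightarrow> x (Suc k) i = x k i + (\<Sum>j<n. q i j * W k j)"
    and zS: "\<And>k i. i < n \<Longrightarrow> z (Suc k) i = z k i + (\<Sum>j<n. q i j * W k j) - W k i"
    and zP: "\<And>k i. i < n \<Longrightarrow> g i = psi k \<Longrightarrow> z (Suc k) i = 0"
    and Wz: "\<And>k j. (\<forall>i<n. z k i \<ge> 0) \<Longrightarrow> j < n \<Longrightarrow> g j = psi k \<Longrightarrow> W k j \<ge> z k j"
    and W0: "\<And>k j. j < n \<Longrightarrow> g j \<noteq> psi k \<Longrightarrow> W k j = 0"
  shows "(\<forall>i<n. (\<lambda>k. x k i) \<longlonglongrightarrow> xs i) \<and>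
         ((\<exists>T>0. \<forall>k. \<forall>h<N. \<exists>t<T. psi (k + t) = h) \<longrightarrow>
           (\<exists>\<rho>. 0 < \<rho> \<and> \<rho> < 1 \<and> (\<forall>k. sqrt (\<Sum>i<n. (x k i - xs i)\<^sup>2) \<le> \<rho> ^ k)))"
proof -
  have znn: "\<forall>i<n. z k i \<ge> 0" for k
  proof (induction k)
    case 0 then show ?case using z0 bb by simp
  next
    case (Suc k)
    have Wn: "W k j \<ge> 0" if "j < n" for j
      using Wz[OF Suc that] W0[OF that] Suc that by (cases "g j = psi k") force+
    show ?case
    proof (intro allI impI)
      fix i assume i: "i < n"
      show "z (Suc k) i \<ge> 0"
      proof (cases "g i = psi k")
        case True then show ?thesis using zP[OF i] by simp
      next
        case False
        have "0 \<le> (\<Sum>j<n. q i j * W k j)" by (intro sum_nonneg) (simp add: qnn i Wn)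
        then show ?thesis using zS[OF i, of k] W0[OF i False] Suc i by simp
      qed
    qed
  qed
  have Wnn: "W k j \<ge> 0" if "j < n" for j k
  proof (cases "g j = psi k")
    case True
    then show ?thesis using Wz[OF znn that True] znn[of k] that by force
  next
    case False
    then show ?thesis using W0[OF that False] by simp
  qed
  have zmono: "z (Suc k) i \<ge> z k i" if "i < n" "g i \<noteq> psi k" for i k
  proof -
    have "0 \<le> (\<Sum>j<n. q i j * W k j)" by (intro sum_nonneg) (simp add: qnn that Wnn)
    then show ?thesis using zS[OF that(1), of k] W0[OF that] by simp
  qed
  define s where "s k = (\<Sum>i<n. z k i)" for k
  have sS: "s (Suc k) = s k - m * (\<Sum>j<n. W k j)" for k
  proof -
    have "s (Suc k) = s k + (\<Sum>i<n. \<Sum>j<n. q i j * W k j) - (\<Sum>j<n. W k j)"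
      unfolding s_def by (simp add: zS sum.distrib sum_subtractf)
    also have "(\<Sum>i<n. \<Sum>j<n. q i j * W k j) = (\<Sum>j<n. (1 - m) * W k j)"
      by (subst sum.swap) (simp add: sum_distrib_right[symmetric] qcs)
    also have "\<dots> = (1 - m) * (\<Sum>j<n. W k j)" by (simp add: sum_distrib_left)
    finally show ?thesis by (simp add: algebra_simps)
  qed
  have snn: "s k \<ge> 0" for k unfolding s_def using znn[of k] by (intro sum_nonneg) simp
  have s0: "s 0 = m" unfolding s_def using z0 bb by simp
  have sdec: "s (Suc k) \<le> s k" for k
  proof -
    have "0 \<le> (\<Sum>j<n. W k j)" by (intro sum_nonneg) (simp add: Wnn)
    then show ?thesis using sS[of k] m0 by simp
  qed
  have smono: "s (K + t) \<le> s K" for K t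
    by (induction t) (auto intro: order_trans[OF sdec])
  have stel: "s (K + T) = s K - m * (\<Sum>t<T. \<Sum>j<n. W (K + t) j)" for K T
    by (induction T) (simp_all add: sS algebra_simps)
  have window: "s (K + T) \<le> (1 - m) * s K" if win: "\<forall>h<N. \<exists>t<T. psi (K + t) = h" for K T
  proof -
    have key: "z K j \<le> (\<Sum>t<T. if g j = psi (K + t) then z (K + t) j else 0)" if j: "j < n" for j
    proof -
      have gN: "g j < N" using gN j by simp
      define t0 where "t0 = (LEAST t. psi (K + t) = g j)"
      obtain t1 where t1: "t1 < T" "psi (K + t1) = g j" using win gN by blast
      have t0: "psi (K + t0) = g j" unfolding t0_def by (rule LeastI[of _ t1]) (rule t1(2))
      have t0T: "t0 < T" using Least_le[of "\<lambda>t. psi (K + t) = g j" t1] t1 unfolding t0_def by simp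
      have "t \<le> t0 \<Longrightarrow> z K j \<le> z (K + t) j" for t
      proof (induction t)
        case 0 then show ?case by simp
      next
        case (Suc t)
        have "psi (K + t) \<noteq> g j" using not_less_Least[of t "\<lambda>t. psi (K + t) = g j"] Suc(2)
          unfolding t0_def by auto
        then have "z (K + t) j \<le> z (K + Suc t) j" using zmono[OF j, of "K + t"] by simp
        with Suc show ?case by simp
      qed
      then have "z K j \<le> z (K + t0) j" by simp
      also have "\<dots> = (if g j = psi (K + t0) then z (K + t0) j else 0)" using t0 by simp
      also have "\<dots> \<le> (\<Sum>t<T. if g j = psi (K + t) then z (K + t) j else 0)"
        by (rule member_le_sum[where f = "\<lambda>t. if g j = psi (K + t) then z (K + t) j else 0"])
           (use t0T znn j in auto)
      finally show ?thesis .
    qed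
    have "s K \<le> (\<Sum>j<n. \<Sum>t<T. if g j = psi (K + t) then z (K + t) j else 0)"
      unfolding s_def by (rule sum_mono) (simp add: key)
    also have "\<dots> = (\<Sum>t<T. \<Sum>j<n. if g j = psi (K + t) then z (K + t) j else 0)"
      by (rule sum.swap)
    also have "\<dots> \<le> (\<Sum>t<T. \<Sum>j<n. W (K + t) j)"
      by (intro sum_mono) (use Wz znn Wnn in auto)
    finally have "s K \<le> (\<Sum>t<T. \<Sum>j<n. W (K + t) j)" .
    then have "m * s K \<le> m * (\<Sum>t<T. \<Sum>j<n. W (K + t) j)" using m0 by simp
    then show ?thesis using stel[of K T] by (simp add: algebra_simps)
  qed
  define y where "y k i = xs i - x k i" for k i
  have yinv: "\<forall>i<n. y k i = (\<Sum>j<n. q i j * (z k j + y k j))" for k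
  proof (induction k)
    case 0
    show ?case
    proof (intro allI impI)
      fix i assume i: "i < n"
      have "(\<Sum>j<n. q i j * (z 0 j + y 0 j)) = (\<Sum>j<n. q i j * xs j)"
        by (rule sum.cong) (simp_all add: y_def x0 z0)
      then show "y 0 i = (\<Sum>j<n. q i j * (z 0 j + y 0 j))"
        using xs[OF i] x0[OF i] by (simp add: y_def)
    qed
  next
    case (Suc k)
    have zy: "z (Suc k) j + y (Suc k) j = z k j + y k j - W k j" if "j < n" for j
      using zS[OF that, of k] xS[OF that, of k] by (simp add: y_def)
    show ?case
    proof (intro allI impI)
      fix i assume i: "i < n"
      have "(\<Sum>j<n. q i j * (z (Suc k) j + y (Suc k) j))
          = (\<Sum>j<n. q i j * (z k j + y k j)) - (\<Sum>j<n. q i j * W k j)"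
      proof -
        have "(\<Sum>j<n. q i j * (z (Suc k) j + y (Suc k) j))
          = (\<Sum>j<n. q i j * (z k j + y k j) - q i j * W k j)"
          by (rule sum.cong) (simp_all add: zy right_diff_distrib)
        then show ?thesis by (simp add: sum_subtractf)
      qed
      also have "\<dots> = y (Suc k) i" using Suc i xS[OF i, of k] by (simp add: y_def)
      finally show "y (Suc k) i = (\<Sum>j<n. q i j * (z (Suc k) j + y (Suc k) j))" by simp
    qed
  qed
  have ynn: "y k i \<ge> 0" if i: "i < n" for k i
  proof (rule nonneg_fix[where B = q and c = "1 - m" and v = "\<lambda>i. \<Sum>j<n. q i j * z k j"
        and d = n, OF _ _ _ _ _ i])
    show "\<And>i j. i < n \<Longrightarrow> j < n \<Longrightarrow> 0 \<le> q i j" by (rule qnn)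
    show "\<And>j. j < n \<Longrightarrow> (\<Sum>i<n. q i j) \<le> 1 - m" using qcs by simp
    show "1 - m < 1" using m0 by simp
    show "\<And>i. i < n \<Longrightarrow> 0 \<le> (\<Sum>j<n. q i j * z k j)"
      using qnn znn by (intro sum_nonneg) simp
    show "\<And>i. i < n \<Longrightarrow> y k i = (\<Sum>j<n. q i j * z k j) + (\<Sum>j<n. q i j * y k j)"
      using yinv[of k] by (simp add: algebra_simps sum.distrib)
  qed
  have ysum: "m * (\<Sum>i<n. y k i) = (1 - m) * s k" for k
  proof -
    have "(\<Sum>i<n. y k i) = (\<Sum>i<n. \<Sum>j<n. q i j * (z k j + y k j))"
      using yinv[of k] by simp
    also have "\<dots> = (\<Sum>j<n. (1 - m) * (z k j + y k j))"
      by (subst sum.swap) (simp add: sum_distrib_right[symmetric] qcs)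
    also have "\<dots> = (1 - m) * s k + (1 - m) * (\<Sum>i<n. y k i)"
      unfolding s_def sum_distrib_left[symmetric] sum.distrib by (simp add: algebra_simps)
    finally show ?thesis by (simp add: algebra_simps)
  qed
  have yle: "y k i \<le> s k / m" if i: "i < n" for k i
  proof -
    have "y k i \<le> (\<Sum>i<n. y k i)"
      by (rule member_le_sum[where f = "y k"]) (use i ynn in auto)
    then have "m * y k i \<le> m * (\<Sum>i<n. y k i)" using m0 by simp
    also have "\<dots> \<le> s k"
    proof -
      have "0 \<le> m * s k" using m0 snn[of k] by simp
      then show ?thesis using ysum[of k] by (simp add: algebra_simps)
    qed
    finally show ?thesis using m0 by (simp add: field_simps)
  qed
  have exT: "\<exists>T. s (K + T) \<le> (1 - m) * s K" for K
  proof -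
    define f where "f h = (SOME k. k \<ge> K \<and> psi k = h)" for h
    have f: "f h \<ge> K \<and> psi (f h) = h" if "h < N" for h
      unfolding f_def by (rule someI_ex) (use psi_inf that in blast)
    define T where "T = Suc (\<Sum>h<N. f h - K)"
    have "\<forall>h<N. \<exists>t<T. psi (K + t) = h"
    proof (intro allI impI)
      fix h assume h: "h < N"
      have "f h - K \<le> (\<Sum>h<N. f h - K)" by (rule member_le_sum) (use h in auto)
      then have "f h - K < T" unfolding T_def by simp
      moreover have "psi (K + (f h - K)) = h" using f[OF h] by simp
      ultimately show "\<exists>t<T. psi (K + t) = h" by blast
    qed
    then show ?thesis using window by blast
  qed
  have red: "\<exists>K. s K \<le> (1 - m) ^ j * m" for j
  proof (induction j)
    case 0 then show ?case using s0 by (intro exI[of _ 0]) simp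
  next
    case (Suc j)
    then obtain K where K: "s K \<le> (1 - m) ^ j * m" by blast
    obtain T where T: "s (K + T) \<le> (1 - m) * s K" using exT by blast
    have "(1 - m) * s K \<le> (1 - m) * ((1 - m) ^ j * m)" using K m1 by (simp add: mult_left_mono)
    with T show ?case by (intro exI[of _ "K + T"]) simp
  qed
  have part1: "\<forall>i<n. (\<lambda>k. x k i) \<longlonglongrightarrow> xs i"
  proof (intro allI impI LIMSEQ_I)
    fix i and r :: real assume i: "i < n" and r: "0 < r"
    obtain j where j: "(1 - m) ^ j < r" using real_arch_pow_inv[OF r, of "1 - m"] m0 by auto
    obtain K where K: "s K \<le> (1 - m) ^ j * m" using red by blast
    show "\<exists>no. \<forall>k\<ge>no. norm (x k i - xs i) < r"
    proof (intro exI allI impI)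
      fix k assume k: "K \<le> k"
      have "s k \<le> s K" using smono[of K "k - K"] k by simp
      moreover have "m * y k i \<le> s k" using yle[OF i, of k] m0 by (simp add: field_simps)
      ultimately have "m * y k i \<le> m * (1 - m) ^ j" using K by (simp add: mult.commute)
      then have "y k i \<le> (1 - m) ^ j" using m0 by simp
      then show "norm (x k i - xs i) < r" using ynn[OF i, of k] j by (simp add: y_def)
    qed
  qed
  have part2: "\<exists>\<rho>. 0 < \<rho> \<and> \<rho> < 1 \<and> (\<forall>k. sqrt (\<Sum>i<n. (x k i - xs i)\<^sup>2) \<le> \<rho> ^ k)"
    if T_ex: "\<exists>T>0. \<forall>k. \<forall>h<N. \<exists>t<T. psi (k + t) = h"
  proof -
    obtain T where TT: "T > 0 \<and> (\<forall>k. \<forall>h<N. \<exists>t<T. psi (k + t) = h)"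
      using T_ex by blast
    have T: "T > 0" using TT by (rule conjunct1)
    have win: "\<forall>k. \<forall>h<N. \<exists>t<T. psi (k + t) = h" using TT by (rule conjunct2)
    have win': "s (K + T) \<le> (1 - m) * s K" for K
    proof -
      have "\<forall>h<N. \<exists>t<T. psi (K + t) = h" by (rule spec[OF win])
      then show ?thesis by (rule window)
    qed
    obtain \<rho> where r: "0 < \<rho>" "\<rho> < 1" and rk: "\<And>k. sqrt (\<Sum>i<n. (y k i)\<^sup>2) \<le> \<rho> ^ k"
      using part2_aux[OF m0 m1 T win' smono s0 ysum ynn] by blast
    have eqk: "(\<Sum>i<n. (x k i - xs i)\<^sup>2) = (\<Sum>i<n. (y k i)\<^sup>2)" for k
      unfolding y_def by (rule sum.cong) (simp_all add: power2_commute)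
    show ?thesis
    proof (intro exI conjI allI)
      fix k show "sqrt (\<Sum>i<n. (x k i - xs i)\<^sup>2) \<le> \<rho> ^ k" using rk[of k] by (simp only: eqk)
    qed (use r in auto)
  qed
  show ?thesis using part1 part2 by blast
qed



lemma off_Suc: "off l (Suc h) = off l h + l h" by (simp add: off_def)

lemma off_mono: "h \<le> h' \<Longrightarrow> off l h \<le> off l h'"
  unfolding off_def by (rule sum_mono2) auto

lemma grp_eq: assumes "off l h \<le> i" "i < off l h + l h" shows "grp l i = h"
  unfolding grp_def
proof (rule Least_equality)
  show "i < off l (Suc h)" using assms by (simp add: off_Suc)
  fix h' assume h': "i < off l (Suc h')"
  show "h \<le> h'"
  proof (rule ccontr)
    assume "\<not> h \<le> h'"
    then have "Suc h' \<le> h" by simp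
    then have "off l (Suc h') \<le> off l h" by (rule off_mono)
    with h' assms show False by simp
  qed
qed

lemma grp_props:
  assumes N: "1 \<le> N" and ls: "(\<Sum>h<N. l h) = n" and i: "i < n"
  shows "grp l i < N \<and> off l (grp l i) \<le> i \<and> i < off l (grp l i) + l (grp l i)"
proof -
  define h where "h = (LEAST h. i < off l (Suc h))"
  have ex: "i < off l (Suc (N - 1))" using N ls i by (simp add: off_def)
  have h1: "i < off l (Suc h)" unfolding h_def by (rule LeastI[of _ "N - 1"]) (rule ex)
  have hN: "h \<le> N - 1" unfolding h_def by (rule Least_le) (rule ex)
  have h2: "off l h \<le> i"
  proof (cases h)
    case 0 then show ?thesis by (simp add: off_def)
  next
    case (Suc h'')
    have "\<not> i < off l (Suc h'')" unfolding h_def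
      using not_less_Least[of h'' "\<lambda>h. i < off l (Suc h)"] Suc h_def by simp
    then show ?thesis using Suc by simp
  qed
  have "grp l i = h" using h1 h2 by (intro grp_eq) (simp_all add: off_Suc)
  then show ?thesis using h1 h2 hN N by (simp add: off_Suc)
qed

lemma block_le:
  assumes "h < N" "(\<Sum>h<N. l h) = n" shows "off l h + l h \<le> n"
proof -
  have "off l (Suc h) \<le> off l N" using assms by (intro off_mono) simp
  then show ?thesis using assms by (simp add: off_Suc off_def)
qed

lemma grp_iff:
  assumes N: "1 \<le> N" and ls: "(\<Sum>h<N. l h) = n" and i: "i < n"
  shows "grp l i = p \<longleftrightarrow> off l p \<le> i \<and> i < off l p + l p"
  using grp_props[OF N ls i] grp_eq[of l p i] by auto

lemma block_reindex:
  fixes f :: "nat \<Rightarrow> real"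
  assumes N: "1 \<le> N" and ls: "(\<Sum>h<N. l h) = n" and p: "p < N"
  shows "(\<Sum>j<n. if grp l j = p then f (j - off l p) else 0) = (\<Sum>c<l p. f c)"
proof -
  have sub: "{off l p..<off l p + l p} \<subseteq> {..<n}" using block_le[OF p ls] by auto
  have "(\<Sum>j<n. if grp l j = p then f (j - off l p) else 0)
      = (\<Sum>j<n. if j \<in> {off l p..<off l p + l p} then f (j - off l p) else 0)"
    by (rule sum.cong) (simp_all add: grp_iff[OF N ls])
  also have "\<dots> = (\<Sum>j\<in>{off l p..<off l p + l p}. f (j - off l p))"
    by (subst sum.inter_restrict[symmetric]) (use sub in \<open>simp_all add: Int_absorb1\<close>)
  also have "\<dots> = (\<Sum>c<l p. f c)"
  proof -
    have "{off l p..<off l p + l p} = (\<lambda>c. off l p + c) ` {..<l p}"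
      using image_add_atLeastLessThan[of "off l p" 0 "l p"] by (simp add: lessThan_atLeast0 add.commute)
    then show ?thesis by (simp add: sum.reindex)
  qed
  finally show ?thesis .
qed

lemma mat_vec_sum:
  assumes "A \<in> carrier_mat r c" "v \<in> carrier_vec c" "i < r"
  shows "(A *\<^sub>v v) $ i = (\<Sum>j<c. A $$ (i, j) * v $ j)"
  using assms by (simp add: scalar_prod_def atLeast0LessThan)

lemma IminusB_mv:
  fixes B :: "real mat"
  assumes B: "B \<in> carrier_mat d d" and v: "v \<in> carrier_vec d" and i: "i < d"
  shows "((1\<^sub>m d - B) *\<^sub>v v) $ i = v $ i - (\<Sum>j<d. B $$ (i, j) * v $ j)"
proof -
  have "(1\<^sub>m d - B) *\<^sub>v v = 1\<^sub>m d *\<^sub>v v - B *\<^sub>v v"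
    by (rule minus_mult_distrib_mat_vec[OF one_carrier_mat B v])
  also have "\<dots> = v - B *\<^sub>v v" using v by simp
  finally have e: "(1\<^sub>m d - B) *\<^sub>v v = v - B *\<^sub>v v" .
  have d: "i < dim_vec (B *\<^sub>v v)" using B i by simp
  have "((1\<^sub>m d - B) *\<^sub>v v) $ i = v $ i - (B *\<^sub>v v) $ i"
    unfolding e by (rule index_minus_vec(1)[OF d])
  then show ?thesis using mat_vec_sum[OF B v i] by simp
qed

lemma inv_exists:
  fixes B :: "real mat"
  assumes B: "B \<in> carrier_mat d d"
    and Bnn: "\<And>i j. i < d \<Longrightarrow> j < d \<Longrightarrow> B $$ (i, j) \<ge> 0"
    and cs: "\<And>j. j < d \<Longrightarrow> (\<Sum>i<d. B $$ (i, j)) \<le> c" and c1: "c < 1"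
  shows "\<exists>M. mat_inverse (1\<^sub>m d - B) = Some M \<and> M \<in> carrier_mat d d \<and> (1\<^sub>m d - B) * M = 1\<^sub>m d"
proof (cases "mat_inverse (1\<^sub>m d - B)")
  case None
  have A: "1\<^sub>m d - B \<in> carrier_mat d d" using B by (rule minus_carrier_mat)
  have "1\<^sub>m d - B \<notin> Units (ring_mat TYPE(real) d ())" by (rule mat_inverse(1)[OF A None])
  then have "det (1\<^sub>m d - B) = 0" using det_non_zero_imp_unit[OF A, where b = "()"] by blast
  then obtain v where v: "v \<in> carrier_vec d" "v \<noteq> 0\<^sub>v d" "(1\<^sub>m d - B) *\<^sub>v v = 0\<^sub>v d"
    using det_0_iff_vec_prod_zero[OF A] by blast
  have fix1: "v $ i = 0 + (\<Sum>j<d. B $$ (i, j) * v $ j)" if i: "i < d" for i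
  proof -
    have "((1\<^sub>m d - B) *\<^sub>v v) $ i = 0" using v(3) i by simp
    then show ?thesis using IminusB_mv[OF B v(1) i] by simp
  qed
  have fix2: "- v $ i = 0 + (\<Sum>j<d. B $$ (i, j) * - v $ j)" if i: "i < d" for i
    using fix1[OF i] by (simp add: sum_negf)
  have "v $ i = 0" if i: "i < d" for i
  proof -
    have "v $ i \<ge> 0"
      by (rule nonneg_fix[where B = "\<lambda>i j. B $$ (i, j)" and v = "\<lambda>_. 0" and u = "\<lambda>i. v $ i",
            OF _ _ c1 _ fix1 i]) (simp_all add: Bnn cs)
    moreover have "- v $ i \<ge> 0"
      by (rule nonneg_fix[where B = "\<lambda>i j. B $$ (i, j)" and v = "\<lambda>_. 0" and u = "\<lambda>i. - v $ i",
            OF _ _ c1 _ fix2 i]) (simp_all add: Bnn cs)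
    ultimately show ?thesis by simp
  qed
  then have "v = 0\<^sub>v d" using v(1) by (intro eq_vecI) auto
  with v(2) show ?thesis by simp
next
  case (Some M)
  have A: "1\<^sub>m d - B \<in> carrier_mat d d" using B by (rule minus_carrier_mat)
  from mat_inverse(2)[OF A Some] show ?thesis using Some by blast
qed

lemma inv_fix:
  fixes B M :: "real mat"
  assumes B: "B \<in> carrier_mat d d" and M: "M \<in> carrier_mat d d"
    and inv: "(1\<^sub>m d - B) * M = 1\<^sub>m d" and z: "z \<in> carrier_vec d" and i: "i < d"
  shows "(M *\<^sub>v z) $ i = z $ i + (\<Sum>j<d. B $$ (i, j) * (M *\<^sub>v z) $ j)"
proof -
  have A: "1\<^sub>m d - B \<in> carrier_mat d d" using B by (rule minus_carrier_mat)
  have "(1\<^sub>m d - B) *\<^sub>v (M *\<^sub>v z) = ((1\<^sub>m d - B) * M) *\<^sub>v z"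
    using A M z by simp
  also have "\<dots> = z" using inv z by simp
  finally have "((1\<^sub>m d - B) *\<^sub>v (M *\<^sub>v z)) $ i = z $ i" by simp
  moreover have "M *\<^sub>v z \<in> carrier_vec d" by (rule mult_mat_vec_carrier[OF M z])
  ultimately show ?thesis using IminusB_mv[OF B _ i, of "M *\<^sub>v z"] by simp
qed

theorem proposition2:
  fixes n N :: nat and E :: "(nat \<times> nat) set" and m :: real and xstar :: "real vec"
    and l :: "nat \<Rightarrow> nat" and \<psi> :: "nat \<Rightarrow> nat"
  assumes n2: "n \<ge> 2"
    and E_nodes: "E \<subseteq> {0..<n} \<times> {0..<n}"
    and out: "\<forall>j<n. out_links E j \<noteq> {}"
    and m01: "0 < m" "m < 1"
    and pr: "is_pagerank n E m xstar"
    and N: "1 \<le> N" "N \<le> n"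
    and l_pos: "\<forall>h<N. 1 \<le> l h"
    and l_sum: "(\<Sum>h<N. l h) = n"
    and psi_range: "\<forall>k. \<psi> k < N"
    and psi_inf: "\<forall>h<N. \<forall>K. \<exists>k\<ge>K. \<psi> k = h"
  defines "Q \<equiv> (1 - m) \<cdot>\<^sub>m hyperlink_mat n E"
  defines "x \<equiv> (\<lambda>k. stack n l (fst (alg n m l Q \<psi> k)))"
  shows "(\<forall>i<n. (\<lambda>k. x k $ i) \<longlonglongrightarrow> xstar $ i) \<and>
         ((\<exists>T>0. \<forall>k. \<forall>h<N. \<exists>t<T. \<psi> (k + t) = h) \<longrightarrow>
           (\<exists>C>0. \<exists>\<rho>. 0 < \<rho> \<and> \<rho> < 1 \<and> (\<forall>k. vnorm n (x k - xstar) \<le> C * \<rho> ^ k)))"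
proof -
  have n0: "n > 0" using n2 by simp
  define g where "g = grp l"
  define q where "q i j = Q $$ (i, j)" for i j
  define X where "X k = fst (alg n m l Q \<psi> k)" for k
  define Z where "Z k = snd (alg n m l Q \<psi> k)" for k
  define M where "M k = the (mat_inverse (1\<^sub>m (l (\<psi> k)) - blk l Q (\<psi> k) (\<psi> k)))" for k
  define w where "w k = M k *\<^sub>v Z k (\<psi> k)" for k
  define W where "W k j = (if g j = \<psi> k then w k $ (j - off l (\<psi> k)) else 0)" for k j
  define xf where "xf k i = X k (g i) $ (i - off l (g i))" for k i
  define zf where "zf k i = Z k (g i) $ (i - off l (g i))" for k i
  have gp: "g i < N \<and> off l (g i) \<le> i \<and> i < off l (g i) + l (g i)" if "i < n" for i
    unfolding g_def by (rule grp_props[OF N(1) l_sum that])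
  have gr: "i - off l (g i) < l (g i)" "off l (g i) + (i - off l (g i)) = i" if "i < n" for i
    using gp[OF that] by linarith+
  have giff: "g i = p \<longleftrightarrow> off l p \<le> i \<and> i < off l p + l p" if "i < n" for i p
    unfolding g_def by (rule grp_iff[OF N(1) l_sum that])
  have bl: "off l p + l p \<le> n" if "p < N" for p by (rule block_le[OF that l_sum])
  have Qdim: "Q \<in> carrier_mat n n" unfolding Q_def hyperlink_mat_def by simp
  have Qent: "q i j = (1 - m) * (if i \<in> out_links E j then 1 / real (card (out_links E j)) else 0)"
    if "i < n" "j < n" for i j
    using that unfolding q_def Q_def hyperlink_mat_def by simp
  have qnn: "q i j \<ge> 0" if "i < n" "j < n" for i j
    using Qent[OF that] m01 by simp
  have Osub: "out_links E j \<subseteq> {..<n}" for j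
    using E_nodes unfolding out_links_def by auto
  have qcs: "(\<Sum>i<n. q i j) = 1 - m" if j: "j < n" for j
  proof -
    let ?O = "out_links E j"
    have fin: "finite ?O" using Osub finite_subset by blast
    have ne: "?O \<noteq> {}" using out j by blast
    have cpos: "card ?O > 0" using fin ne by (simp add: card_gt_0_iff)
    have "(\<Sum>i<n. q i j) = (\<Sum>i<n. (1 - m) * (if i \<in> ?O then 1 / real (card ?O) else 0))"
      by (rule sum.cong) (simp_all add: Qent j)
    also have "\<dots> = (1 - m) * (\<Sum>i<n. if i \<in> ?O then 1 / real (card ?O) else 0)"
      by (simp add: sum_distrib_left)
    also have "(\<Sum>i<n. if i \<in> ?O then 1 / real (card ?O) else 0) = (\<Sum>i\<in>{..<n} \<inter> ?O. 1 / real (card ?O))"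
      by (rule sum.inter_restrict[symmetric]) simp
    also have "{..<n} \<inter> ?O = ?O" using Osub by blast
    also have "(\<Sum>i\<in>?O. 1 / real (card ?O)) = 1" using cpos by simp
    finally show ?thesis by simp
  qed
  have blkent: "blk l Q h p $$ (r, c) = q (off l h + r) (off l p + c)" if "r < l h" "c < l p" for h p r c
    using that unfolding blk_def q_def by simp
  have blkcar: "blk l Q h p \<in> carrier_mat (l h) (l p)" for h p
    unfolding blk_def by simp
  have incr_dim: "dim_vec (incr l Q h p v) = l h" for h p v
    unfolding incr_def blk_def by simp
  have XS: "X (Suc k) = (\<lambda>h. X k h + incr l Q h (\<psi> k) (Z k (\<psi> k)))" for k
    unfolding X_def Z_def by (simp add: Let_def case_prod_beta)
  have ZS: "Z (Suc k) = (\<lambda>h. if h = \<psi> k then 0\<^sub>v (l h) else Z k h + incr l Q h (\<psi> k) (Z k (\<psi> k)))" for k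
    unfolding X_def Z_def by (simp add: Let_def case_prod_beta)
  have X0: "X 0 = (\<lambda>h. vec (l h) (\<lambda>_. m / real n))" unfolding X_def by simp
  have Z0: "Z 0 = (\<lambda>h. vec (l h) (\<lambda>_. m / real n))" unfolding Z_def by simp
  have dims: "dim_vec (X k h) = l h \<and> dim_vec (Z k h) = l h" for k h
    by (induction k) (simp_all add: XS ZS X0 Z0 incr_dim)
  have Zcar: "Z k h \<in> carrier_vec (l h)" for k h using dims[of k h] unfolding carrier_vec_def by blast
  have blkcs: "(\<Sum>r<l p. blk l Q p p $$ (r, c)) \<le> 1 - m" if p: "p < N" and c: "c < l p" for p c
  proof -
    let ?p = p
    have "(\<Sum>r<l ?p. blk l Q ?p ?p $$ (r, c)) = (\<Sum>r<l ?p. q (off l ?p + r) (off l ?p + c))"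
      by (rule sum.cong) (simp_all add: blkent c)
    also have "\<dots> = (\<Sum>i\<in>(\<lambda>r. off l ?p + r) ` {..<l ?p}. q i (off l ?p + c))"
      by (simp add: sum.reindex)
    also have "\<dots> \<le> (\<Sum>i<n. q i (off l ?p + c))"
      by (rule sum_mono2) (use bl[OF p] c in \<open>auto intro!: qnn\<close>)
    also have "\<dots> = 1 - m" using qcs bl[OF p] c by simp
    finally show ?thesis .
  qed
  have Minv: "M k \<in> carrier_mat (l (\<psi> k)) (l (\<psi> k)) \<and>
      (1\<^sub>m (l (\<psi> k)) - blk l Q (\<psi> k) (\<psi> k)) * M k = 1\<^sub>m (l (\<psi> k))" for k
  proof -
    let ?p = "\<psi> k"
    have p: "?p < N" using psi_range by simp
    have "\<exists>M'. mat_inverse (1\<^sub>m (l ?p) - blk l Q ?p ?p) = Some M' \<and> M' \<in> carrier_mat (l ?p) (l ?p)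
        \<and> (1\<^sub>m (l ?p) - blk l Q ?p ?p) * M' = 1\<^sub>m (l ?p)"
    proof (rule inv_exists[OF blkcar, where c = "1 - m"])
      fix r c assume rc: "r < l ?p" "c < l ?p"
      then show "0 \<le> blk l Q ?p ?p $$ (r, c)" using bl[OF p] by (simp add: blkent qnn)
    next
      fix c assume c: "c < l ?p"
      show "(\<Sum>r<l ?p. blk l Q ?p ?p $$ (r, c)) \<le> 1 - m" by (rule blkcs[OF p c])
    next
      show "1 - m < 1" using m01 by simp
    qed
    then show ?thesis unfolding M_def by auto
  qed
  have wcar: "w k \<in> carrier_vec (l (\<psi> k))" for k
    unfolding w_def by (rule mult_mat_vec_carrier[OF conjunct1[OF Minv[of k]] Zcar])
  have wfix: "w k $ r = Z k (\<psi> k) $ r + (\<Sum>c<l (\<psi> k). blk l Q (\<psi> k) (\<psi> k) $$ (r, c) * w k $ c)"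
    if "r < l (\<psi> k)" for k r
    unfolding w_def by (rule inv_fix[OF blkcar conjunct1[OF Minv[of k]] conjunct2[OF Minv[of k]] Zcar that])
  have QW: "(\<Sum>j<n. q i j * W k j) = (\<Sum>c<l (\<psi> k). q i (off l (\<psi> k) + c) * w k $ c)"
    if i: "i < n" for i k
  proof -
    let ?p = "\<psi> k"
    have p: "?p < N" using psi_range by simp
    have "(\<Sum>j<n. q i j * W k j)
        = (\<Sum>j<n. if grp l j = ?p then q i (off l ?p + (j - off l ?p)) * w k $ (j - off l ?p) else 0)"
    proof (rule sum.cong)
      fix j assume "j \<in> {..<n}"
      then have j: "j < n" by simp
      show "q i j * W k j
        = (if grp l j = ?p then q i (off l ?p + (j - off l ?p)) * w k $ (j - off l ?p) else 0)"
        using giff[OF j, of ?p] unfolding W_def g_def by auto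
    qed simp
    also have "\<dots> = (\<Sum>c<l ?p. q i (off l ?p + c) * w k $ c)"
      by (rule block_reindex[OF N(1) l_sum p])
    finally show ?thesis .
  qed
  have incr_ent: "incr l Q (g i) (\<psi> k) (Z k (\<psi> k)) $ (i - off l (g i))
      = (\<Sum>c<l (\<psi> k). q i (off l (\<psi> k) + c) * w k $ c)" if i: "i < n" for i k
  proof -
    let ?p = "\<psi> k" and ?h = "g i"
    have r: "i - off l ?h < l ?h" and hi: "off l ?h + (i - off l ?h) = i" using gr[OF i] by auto
    have "incr l Q ?h ?p (Z k ?p) $ (i - off l ?h) = (blk l Q ?h ?p *\<^sub>v w k) $ (i - off l ?h)"
      unfolding incr_def w_def M_def by simp
    also have "\<dots> = (\<Sum>c<l ?p. blk l Q ?h ?p $$ (i - off l ?h, c) * w k $ c)"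
      by (rule mat_vec_sum[OF blkcar wcar r])
    also have "\<dots> = (\<Sum>c<l ?p. q i (off l ?p + c) * w k $ c)"
      by (rule sum.cong) (simp_all add: blkent[OF r] hi)
    finally show ?thesis .
  qed
  have x0: "xf 0 i = m / real n" if "i < n" for i
  proof -
    have "i - off l (g i) < l (g i)" using gp[OF that] by linarith
    then show ?thesis unfolding xf_def X0 by (rule index_vec)
  qed
  have z0: "zf 0 i = m / real n" if "i < n" for i
  proof -
    have "i - off l (g i) < l (g i)" using gp[OF that] by linarith
    then show ?thesis unfolding zf_def Z0 by (rule index_vec)
  qed
  have xcar: "xstar \<in> carrier_vec n" using pr unfolding is_pagerank_def by blast
  have pe: "xstar = Q *\<^sub>v xstar + vec n (\<lambda>_. m / real n)"
    using pr unfolding is_pagerank_def Q_def by blast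
  have xs: "xstar $ i = (\<Sum>j<n. q i j * xstar $ j) + m / real n" if i: "i < n" for i
  proof -
    have "xstar $ i = (Q *\<^sub>v xstar + vec n (\<lambda>_. m / real n)) $ i" by (rule arg_cong[OF pe])
    also have "\<dots> = (Q *\<^sub>v xstar) $ i + m / real n" using i by simp
    also have "(Q *\<^sub>v xstar) $ i = (\<Sum>j<n. q i j * xstar $ j)"
      unfolding q_def by (rule mat_vec_sum[OF Qdim xcar i])
    finally show ?thesis .
  qed
  have xS: "xf (Suc k) i = xf k i + (\<Sum>j<n. q i j * W k j)" if i: "i < n" for k i
  proof -
    have r: "i - off l (g i) < dim_vec (incr l Q (g i) (\<psi> k) (Z k (\<psi> k)))"
      using gr[OF i] by (simp add: incr_dim)
    show ?thesis unfolding xf_def XS using index_add_vec(1)[OF r] QW[OF i] incr_ent[OF i] by simp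
  qed
  have zS: "zf (Suc k) i = zf k i + (\<Sum>j<n. q i j * W k j) - W k i" if i: "i < n" for k i
  proof (cases "g i = \<psi> k")
    case True
    let ?p = "\<psi> k"
    have r: "i - off l ?p < l ?p" and hi: "off l ?p + (i - off l ?p) = i" using gr[OF i] True by auto
    have "(\<Sum>j<n. q i j * W k j) = (\<Sum>c<l ?p. blk l Q ?p ?p $$ (i - off l ?p, c) * w k $ c)"
      unfolding QW[OF i] by (rule sum.cong) (simp_all add: blkent[OF r] hi)
    then show ?thesis using wfix[OF r] True r unfolding zf_def ZS W_def by simp
  next
    case False
    have r: "i - off l (g i) < dim_vec (incr l Q (g i) (\<psi> k) (Z k (\<psi> k)))"
      using gr[OF i] by (simp add: incr_dim)
    show ?thesis unfolding zf_def ZS W_def using False index_add_vec(1)[OF r] QW[OF i] incr_ent[OF i]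
      by (simp add: W_def)
  qed
  have zP: "zf (Suc k) i = 0" if i: "i < n" and "g i = \<psi> k" for k i
    using gr[OF i] that unfolding zf_def ZS by simp
  have Wz: "W k j \<ge> zf k j" if znn: "\<forall>i<n. zf k i \<ge> 0" and j: "j < n" and gj: "g j = \<psi> k" for k j
  proof -
    let ?p = "\<psi> k"
    have p: "?p < N" using psi_range by simp
    have r: "j - off l ?p < l ?p" using gr[OF j] gj by auto
    have Znn: "Z k ?p $ c \<ge> 0" if c: "c < l ?p" for c
    proof -
      have cn: "off l ?p + c < n" using bl[OF p] c by simp
      have "g (off l ?p + c) = ?p" using giff[OF cn] c by simp
      then show ?thesis using znn cn unfolding zf_def by force
    qed
    have Bnn: "blk l Q ?p ?p $$ (r, c) \<ge> 0" if "r < l ?p" "c < l ?p" for r c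
      using that bl[OF p] by (simp add: blkent qnn)
    have wnn: "w k $ c \<ge> 0" if c: "c < l ?p" for c
    proof (rule nonneg_fix[where B = "\<lambda>r c. blk l Q ?p ?p $$ (r, c)" and c = "1 - m"
            and v = "\<lambda>c. Z k ?p $ c" and u = "\<lambda>c. w k $ c", OF _ _ _ _ wfix c])
      show "\<And>i j. i < l ?p \<Longrightarrow> j < l ?p \<Longrightarrow> 0 \<le> blk l Q ?p ?p $$ (i, j)" by (rule Bnn)
      show "\<And>j. j < l ?p \<Longrightarrow> (\<Sum>i<l ?p. blk l Q ?p ?p $$ (i, j)) \<le> 1 - m"
        by (rule blkcs[OF p])
      show "1 - m < 1" using m01 by simp
      show "\<And>i. i < l ?p \<Longrightarrow> 0 \<le> Z k ?p $ i" by (rule Znn)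
    qed
    have "0 \<le> (\<Sum>c<l ?p. blk l Q ?p ?p $$ (j - off l ?p, c) * w k $ c)"
      by (intro sum_nonneg) (simp add: Bnn r wnn)
    then have "w k $ (j - off l ?p) \<ge> Z k ?p $ (j - off l ?p)" using wfix[OF r] by linarith
    then show ?thesis unfolding W_def zf_def using gj by simp
  qed
  have W0: "W k j = 0" if "g j \<noteq> \<psi> k" for k j
    using that unfolding W_def by simp
  have conv: "(\<forall>i<n. (\<lambda>k. xf k i) \<longlonglongrightarrow> xstar $ i) \<and>
         ((\<exists>T>0. \<forall>k. \<forall>h<N. \<exists>t<T. \<psi> (k + t) = h) \<longrightarrow>
           (\<exists>\<rho>. 0 < \<rho> \<and> \<rho> < 1 \<and> (\<forall>k. sqrt (\<Sum>i<n. (xf k i - xstar $ i)\<^sup>2) \<le> \<rho> ^ k)))"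
  proof (rule abstract_conv[where q = q and z = zf and W = W and g = g and bb = "m / real n"])
    show "0 < m" "m < 1" using m01 by simp_all
    show "\<And>i j. i < n \<Longrightarrow> j < n \<Longrightarrow> 0 \<le> q i j" by (rule qnn)
    show "\<And>j. j < n \<Longrightarrow> (\<Sum>i<n. q i j) = 1 - m" by (rule qcs)
    show "\<And>k. \<psi> k < N" using psi_range by simp
    show "\<And>i. i < n \<Longrightarrow> g i < N" using gp by blast
    show "\<forall>h<N. \<forall>K. \<exists>k\<ge>K. \<psi> k = h" by (rule psi_inf)
    show "0 \<le> m / real n" using m01 by simp
    show "real n * (m / real n) = m" using n0 by simp
  qed (use x0 z0 xs xS zS zP Wz W0 in auto)
  show ?thesis
  proof -
    have xk: "x k $ i = xf k i" if "i < n" for k i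
      using that unfolding x_def stack_def xf_def X_def g_def by simp
    have vn: "vnorm n (x k - xstar) = sqrt (\<Sum>i<n. (xf k i - xstar $ i)\<^sup>2)" for k
    proof -
      have "(\<Sum>i<n. ((x k - xstar) $ i)\<^sup>2) = (\<Sum>i<n. (xf k i - xstar $ i)\<^sup>2)"
        by (rule sum.cong) (use xcar xk in auto)
      then show ?thesis unfolding vnorm_def by simp
    qed
    have p1: "\<forall>i<n. (\<lambda>k. x k $ i) \<longlonglongrightarrow> xstar $ i"
    proof (intro allI impI)
      fix i assume i: "i < n"
      have "(\<lambda>k. xf k i) \<longlonglongrightarrow> xstar $ i" using conv i by blast
      then show "(\<lambda>k. x k $ i) \<longlonglongrightarrow> xstar $ i" using xk[OF i] by simp
    qed
    have p2: "\<exists>C>0. \<exists>\<rho>. 0 < \<rho> \<and> \<rho> < 1 \<and> (\<forall>k. vnorm n (x k - xstar) \<le> C * \<rho> ^ k)"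
      if Tex: "\<exists>T>0. \<forall>k. \<forall>h<N. \<exists>t<T. \<psi> (k + t) = h"
    proof -
      obtain \<rho> where r: "0 < \<rho>" "\<rho> < 1"
        and rk: "\<forall>k. sqrt (\<Sum>i<n. (xf k i - xstar $ i)\<^sup>2) \<le> \<rho> ^ k"
        using conv Tex by blast
      show ?thesis
      proof (intro exI conjI allI)
        show "(0::real) < 1" by simp
        show "0 < \<rho>" "\<rho> < 1" by (rule r(1), rule r(2))
        fix k show "vnorm n (x k - xstar) \<le> 1 * \<rho> ^ k" using rk vn by simp
      qed
    qed
    show ?thesis using p1 p2 by blast
  qed
qed

end
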